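(* Let $D\subseteq\mathbb{R}$, let $g:D\to\mathbb{R}$ be ordinal decreasing on $D$, let $a=\sup_{x\in D}(-g(x))$, and let $f$ be a real function that is ordinal decreasing up to $a$. Then the function $x\mapsto f(-g(x))$ is ordinal decreasing on $D$.
   Context: For a function $h$ defined on a set $E\subseteq\mathbb{R}$, a strictly decreasing sequence $x_1>x_2>\cdots$ in $E$ is $h$-bad if $h(x_1)>h(x_2)>\cdots$; $h$ is ordinal decreasing on $E$ if there is no infinite $h$-bad sequence in $E$. A function $f$ is ordinal decreasing up to $a$ if it is defined on $(-\infty,a]$ and is ordinal decreasing on $(-\infty,a]$. *)

theory Defs
  imports Complex_Main
begin

definition bad_seq :: "real set \<Rightarrow> (real \<Rightarrow> real) \<Rightarrow> (nat \<Rightarrow> real) \<Rightarrow> bool" where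
  "bad_seq E h x \<longleftrightarrow> (\<forall>n. x n \<in> E) \<and> (\<forall>n. x (Suc n) < x n) \<and> (\<forall>n. h (x (Suc n)) < h (x n))"

definition ordinal_decreasing_on :: "real set \<Rightarrow> (real \<Rightarrow> real) \<Rightarrow> bool" where
  "ordinal_decreasing_on E h \<longleftrightarrow> \<not> (\<exists>x. bad_seq E h x)"

definition ordinal_decreasing_up_to :: "(real \<Rightarrow> real) \<Rightarrow> real \<Rightarrow> bool" where
  "ordinal_decreasing_up_to f a \<longleftrightarrow> ordinal_decreasing_on {..a} f"

end

theory Submission
  imports Defs
begin

lemma dec_lt:
  fixes h :: "nat \<Rightarrow> real"
  assumes "\<And>n. h (Suc n) < h n" and "m < n"
  shows "h n < h m"
  using assms(2)
proof (induction n)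
  case 0 then show ?case by simp
next
  case (Suc n)
  then show ?case using assms(1)[of n] by (cases "m < n") (auto simp: less_Suc_eq)
qed

theorem lemma3:
  fixes D :: "real set" and g f :: "real \<Rightarrow> real" and a :: real
  assumes "D \<noteq> {}"
    and "bdd_above ((\<lambda>x. - g x) ` D)"
    and "ordinal_decreasing_on D g"
    and "a = (SUP x\<in>D. - g x)"
    and "ordinal_decreasing_up_to f a"
  shows "ordinal_decreasing_on D (\<lambda>x. f (- g x))"
proof -
  { fix x assume bad: "bad_seq D (\<lambda>x. f (- g x)) x"
    define y where "y = (\<lambda>n. - g (x n))"
    have xD: "\<And>n. x n \<in> D" and xs: "\<And>n. x (Suc n) < x n"
      and fs: "\<And>n. f (y (Suc n)) < f (y n)"
      using bad unfolding bad_seq_def y_def by auto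
    have ya: "\<And>n. y n \<le> a" unfolding y_def assms(4)
      using xD assms(2) by (intro cSUP_upper) auto
    have xlt: "\<And>m n. m < n \<Longrightarrow> x n < x m" using dec_lt[of x] xs by blast
    have flt: "\<And>m n. m < n \<Longrightarrow> f (y n) < f (y m)"
      using dec_lt[of "\<lambda>n. f (y n)"] fs by blast
    obtain r where r: "strict_mono r" "monoseq (\<lambda>n. y (r n))"
      using seq_monosub by blast
    have rs: "\<And>n. r n < r (Suc n)" using r(1) by (simp add: strict_mono_def)
    have yne: "y (r (Suc n)) \<noteq> y (r n)" for n
      using flt[OF rs[of n]] by force
    from r(2) have False
      unfolding monoseq_def
    proof
      assume inc: "\<forall>m n. m \<le> n \<longrightarrow> y (r m) \<le> y (r n)"
      have "bad_seq D g (\<lambda>n. x (r n))"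
        unfolding bad_seq_def
      proof (intro conjI allI)
        fix n
        show "x (r n) \<in> D" by (rule xD)
        show "x (r (Suc n)) < x (r n)" using xlt[OF rs] .
        have "y (r n) < y (r (Suc n))" using inc yne[of n]
          by (metis le_less lessI less_imp_le)
        then show "g (x (r (Suc n))) < g (x (r n))" unfolding y_def by simp
      qed
      then show False using assms(3) unfolding ordinal_decreasing_on_def by blast
    next
      assume dec: "\<forall>m n. m \<le> n \<longrightarrow> y (r n) \<le> y (r m)"
      have "bad_seq {..a} f (\<lambda>n. y (r n))"
        unfolding bad_seq_def
      proof (intro conjI allI)
        fix n
        show "y (r n) \<in> {..a}" using ya by simp
        show "y (r (Suc n)) < y (r n)" using dec yne[of n]
          by (metis le_less lessI less_imp_le)
        show "f (y (r (Suc n))) < f (y (r n))" using flt[OF rs] .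
      qed
      then show False using assms(5)
        unfolding ordinal_decreasing_up_to_def ordinal_decreasing_on_def by blast
    qed }
  then show ?thesis unfolding ordinal_decreasing_on_def by blast
qed

end
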